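(* Consider a triadic majority rule round among participants $x,y,z$ (nodes of a median graph), started from any state of the round (any current winner and any proposer). Suppose $y$ and $z$ follow truthful bargaining while $x$ follows an arbitrary (possibly history-dependent) strategy. Then either the round never ends, or $m(x,y,z)$ lies on a shortest path between $x$ and the winner $\hat w$ of the round.
   Context: $G$ is a finite connected unweighted undirected median graph: with shortest-path distance $d$ and $I_{ab}=\{v:d(a,v)+d(v,b)=d(a,b)\}$, $\lvert I_{ab}\cap I_{ac}\cap I_{bc}\rvert=1$ for all $a,b,c$, and $m(a,b,c)$ is that node. Triadic majority rule round: there is a current winner and a proposer. In each step the proposer proposes a node or a motion to end; all three vote simultaneously to accept or reject. An accepted alternative becomes the current winner. If the vote is unanimous the proposer stays; otherwise the participant in the minority becomes proposer. If a motion to end is accepted by majority, the round ends with winner the current winner. Truthful bargaining for $u$ with current winner $w$: $P_u=I_{uw}\setminus\{w\}$, $B_u=(P_u\cap P_{u'})\cup(P_u\cap P_{u''})$ ($u',u''$ the other members); $u$ proposes a point of $B_u$ closest to $u$ if $B_u\neq\emptyset$ and a motion to end otherwise; accepts an alternative $a$ iff $d(u,a)<d(u,w)$; accepts a motion to end iff $B_u=\emptyset$; ties broken arbitrarily. *)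

theory Defs
  imports Main
begin

inductive walk :: "('a \<Rightarrow> 'a \<Rightarrow> bool) \<Rightarrow> 'a \<Rightarrow> 'a \<Rightarrow> nat \<Rightarrow> bool" for E where
  walk_refl: "walk E u u 0"
| walk_step: "E u v \<Longrightarrow> walk E v w n \<Longrightarrow> walk E u w (Suc n)"

definition gdist :: "('a \<Rightarrow> 'a \<Rightarrow> bool) \<Rightarrow> 'a \<Rightarrow> 'a \<Rightarrow> nat" where
  "gdist E u v = (LEAST n. walk E u v n)"

definition interval :: "'a set \<Rightarrow> ('a \<Rightarrow> 'a \<Rightarrow> bool) \<Rightarrow> 'a \<Rightarrow> 'a \<Rightarrow> 'a set" where
  "interval V E a b = {v \<in> V. gdist E a v + gdist E v b = gdist E a b}"

definition median_graph :: "'a set \<Rightarrow> ('a \<Rightarrow> 'a \<Rightarrow> bool) \<Rightarrow> bool" where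
  "median_graph V E \<longleftrightarrow>
     finite V \<and> V \<noteq> {} \<and>
     (\<forall>u v. E u v \<longrightarrow> u \<in> V \<and> v \<in> V) \<and>
     (\<forall>u v. E u v \<longrightarrow> E v u) \<and>
     (\<forall>u. \<not> E u u) \<and>
     (\<forall>u\<in>V. \<forall>v\<in>V. \<exists>n. walk E u v n) \<and>
     (\<forall>a\<in>V. \<forall>b\<in>V. \<forall>c\<in>V.
        card (interval V E a b \<inter> interval V E a c \<inter> interval V E b c) = 1)"

definition median :: "'a set \<Rightarrow> ('a \<Rightarrow> 'a \<Rightarrow> bool) \<Rightarrow> 'a \<Rightarrow> 'a \<Rightarrow> 'a \<Rightarrow> 'a" where
  "median V E a b c = (THE m. m \<in> interval V E a b \<inter> interval V E a c \<inter> interval V E b c)"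

datatype agent = AX | AY | AZ

datatype 'a proposal = Node 'a | EndMotion

definition loc :: "'a \<Rightarrow> 'a \<Rightarrow> 'a \<Rightarrow> agent \<Rightarrow> 'a" where
  "loc x y z a = (case a of AX \<Rightarrow> x | AY \<Rightarrow> y | AZ \<Rightarrow> z)"

definition accepted :: "(agent \<Rightarrow> bool) \<Rightarrow> bool" where
  "accepted vt \<longleftrightarrow> (vt AX \<and> vt AY) \<or> (vt AX \<and> vt AZ) \<or> (vt AY \<and> vt AZ)"

definition unanimous :: "(agent \<Rightarrow> bool) \<Rightarrow> bool" where
  "unanimous vt \<longleftrightarrow> vt AX = vt AY \<and> vt AY = vt AZ"

definition minority :: "(agent \<Rightarrow> bool) \<Rightarrow> agent" where
  "minority vt = (THE a. \<forall>b. b \<noteq> a \<longrightarrow> vt b \<noteq> vt a)"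

definition next_proposer :: "agent \<Rightarrow> (agent \<Rightarrow> bool) \<Rightarrow> agent" where
  "next_proposer p vt = (if unanimous vt then p else minority vt)"

definition next_winner :: "'a \<Rightarrow> 'a proposal \<Rightarrow> (agent \<Rightarrow> bool) \<Rightarrow> 'a" where
  "next_winner w q vt = (case q of Node v \<Rightarrow> if accepted vt then v else w | EndMotion \<Rightarrow> w)"

text \<open>Truthful bargaining. pl: positions of the agents, u: the agent, w: current winner.\<close>

definition Pset :: "'a set \<Rightarrow> ('a \<Rightarrow> 'a \<Rightarrow> bool) \<Rightarrow> (agent \<Rightarrow> 'a) \<Rightarrow> agent \<Rightarrow> 'a \<Rightarrow> 'a set" where
  "Pset V E pl u w = interval V E (pl u) w - {w}"

definition Bset :: "'a set \<Rightarrow> ('a \<Rightarrow> 'a \<Rightarrow> bool) \<Rightarrow> (agent \<Rightarrow> 'a) \<Rightarrow> agent \<Rightarrow> 'a \<Rightarrow> 'a set" where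
  "Bset V E pl u w = (\<Union>u'\<in>{a. a \<noteq> u}. Pset V E pl u w \<inter> Pset V E pl u' w)"

definition truthful_proposal ::
  "'a set \<Rightarrow> ('a \<Rightarrow> 'a \<Rightarrow> bool) \<Rightarrow> (agent \<Rightarrow> 'a) \<Rightarrow> agent \<Rightarrow> 'a \<Rightarrow> 'a proposal \<Rightarrow> bool" where
  "truthful_proposal V E pl u w q \<longleftrightarrow>
     (if Bset V E pl u w \<noteq> {}
      then (\<exists>v. q = Node v \<and> v \<in> Bset V E pl u w \<and>
                 (\<forall>v'\<in>Bset V E pl u w. gdist E (pl u) v \<le> gdist E (pl u) v'))
      else q = EndMotion)"

definition truthful_vote ::
  "'a set \<Rightarrow> ('a \<Rightarrow> 'a \<Rightarrow> bool) \<Rightarrow> (agent \<Rightarrow> 'a) \<Rightarrow> agent \<Rightarrow> 'a \<Rightarrow> 'a proposal \<Rightarrow> bool \<Rightarrow> bool" where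
  "truthful_vote V E pl u w q b \<longleftrightarrow>
     (case q of Node a \<Rightarrow> b = (gdist E (pl u) a < gdist E (pl u) w)
              | EndMotion \<Rightarrow> b = (Bset V E pl u w = {}))"

text \<open>An ending play of a round of n+1 steps: at step i the current winner is w i, the proposer
  p i, the proposal q i and the votes vt i.  Agents AY and AZ follow truthful bargaining (with
  arbitrary tie-breaking); agent AX is unconstrained apart from proposing nodes of the graph
  (i.e. it may follow any, possibly history-dependent, strategy).\<close>

definition ending_play ::
  "'a set \<Rightarrow> ('a \<Rightarrow> 'a \<Rightarrow> bool) \<Rightarrow> (agent \<Rightarrow> 'a) \<Rightarrow> (nat \<Rightarrow> 'a) \<Rightarrow> (nat \<Rightarrow> agent)
   \<Rightarrow> (nat \<Rightarrow> 'a proposal) \<Rightarrow> (nat \<Rightarrow> agent \<Rightarrow> bool) \<Rightarrow> nat \<Rightarrow> bool" where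
  "ending_play V E pl w p q vt n \<longleftrightarrow>
     w 0 \<in> V \<and>
     (\<forall>i\<le>n. \<forall>v. q i = Node v \<longrightarrow> v \<in> V) \<and>
     (\<forall>i\<le>n. p i \<noteq> AX \<longrightarrow> truthful_proposal V E pl (p i) (w i) (q i)) \<and>
     (\<forall>i\<le>n. \<forall>u. u \<noteq> AX \<longrightarrow> truthful_vote V E pl u (w i) (q i) (vt i u)) \<and>
     (\<forall>i<n. \<not> (q i = EndMotion \<and> accepted (vt i))) \<and>
     (\<forall>i<n. w (Suc i) = next_winner (w i) (q i) (vt i)) \<and>
     (\<forall>i<n. p (Suc i) = next_proposer (p i) (vt i)) \<and>
     q n = EndMotion \<and> accepted (vt n)"

end

theory Submission
  imports Defs
begin

lemma walk_append: "walk E u v m \<Longrightarrow> walk E v w k \<Longrightarrow> walk E u w (m+k)"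
  by (induction rule: walk.induct) (auto intro: walk.intros)

lemma walk_rev: assumes "\<forall>u v. E u v \<longrightarrow> E v u" shows "walk E u v n \<Longrightarrow> walk E v u n"
proof (induction rule: walk.induct)
  case (walk_refl u) then show ?case by (rule walk.walk_refl)
next
  case (walk_step u v w n)
  have "walk E v u 1" using assms walk_step(1) by (auto intro: walk.intros)
  from walk_append[OF walk_step(3) this] show ?case by simp
qed

lemma gdist_sym: assumes "\<forall>u v. E u v \<longrightarrow> E v u" shows "gdist E a b = gdist E b a"
proof -
  have "\<And>n. walk E a b n = walk E b a n" using walk_rev[OF assms] by blast
  then have "walk E a b = walk E b a" by blast
  then show ?thesis unfolding gdist_def by simp
qed

lemma gdist_walk: "walk E u v n \<Longrightarrow> walk E u v (gdist E u v) \<and> gdist E u v \<le> n"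
  unfolding gdist_def by (auto intro: LeastI Least_le)

lemma mg_sym: "median_graph V E \<Longrightarrow> \<forall>u v. E u v \<longrightarrow> E v u"
  unfolding median_graph_def by blast

lemma tri: assumes "median_graph V E" "a \<in> V" "b \<in> V" "c \<in> V"
  shows "gdist E a c \<le> gdist E a b + gdist E b c"
proof -
  obtain n1 where "walk E a b n1" using assms unfolding median_graph_def by blast
  then have w1: "walk E a b (gdist E a b)" using gdist_walk[of E a b] by blast
  obtain n2 where "walk E b c n2" using assms unfolding median_graph_def by blast
  then have w2: "walk E b c (gdist E b c)" using gdist_walk[of E b c] by blast
  from walk_append[OF w1 w2] show ?thesis using gdist_walk[of E a c] by blast
qed

lemma interval_sym: "median_graph V E \<Longrightarrow> interval V E a b = interval V E b a"
proof -
  assume "median_graph V E"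
  note s = gdist_sym[OF mg_sym[OF this]]
  show ?thesis unfolding interval_def using s[of a] s[of _ b] s[of b a] by (auto simp: add.commute)
qed

lemma med_ex: assumes "median_graph V E" "a \<in> V" "b \<in> V" "c \<in> V"
  shows "\<exists>!t. t \<in> interval V E a b \<inter> interval V E a c \<inter> interval V E b c"
proof -
  have "card (interval V E a b \<inter> interval V E a c \<inter> interval V E b c) = 1"
    using assms unfolding median_graph_def by blast
  then obtain t where "interval V E a b \<inter> interval V E a c \<inter> interval V E b c = {t}"
    by (meson card_1_singletonE)
  then show ?thesis by (metis singleton_iff)
qed

lemma med_in: assumes "median_graph V E" "a \<in> V" "b \<in> V" "c \<in> V"
  shows "median V E a b c \<in> interval V E a b \<inter> interval V E a c \<inter> interval V E b c"
  unfolding median_def using theI'[OF med_ex[OF assms]] .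

lemma med_uniq: assumes "median_graph V E" "a \<in> V" "b \<in> V" "c \<in> V"
  and "t \<in> interval V E a b \<inter> interval V E a c \<inter> interval V E b c"
  shows "median V E a b c = t"
  using med_ex[OF assms(1-4)] med_in[OF assms(1-4)] assms(5) by blast

lemma med_perm: assumes "median_graph V E" "x \<in> V" "y \<in> V" "z \<in> V"
  shows "median V E x z y = median V E x y z"
proof -
  have "median V E x z y \<in> interval V E x y \<inter> interval V E x z \<inter> interval V E y z"
    using med_in[OF assms(1,2,4,3)] interval_sym[OF assms(1)] by blast
  then show ?thesis using med_uniq[OF assms] by simp
qed

lemma noncommon: assumes mg: "median_graph V E" and "a \<in> V" "b \<in> V" "w \<in> V"
  and e: "(interval V E a w - {w}) \<inter> (interval V E b w - {w}) = {}"
  shows "w \<in> interval V E a b"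
proof -
  obtain t where t: "t \<in> interval V E a b \<inter> interval V E a w \<inter> interval V E b w"
    using med_ex[OF assms(1-4)] by blast
  then have "t = w" using e by blast
  then show ?thesis using t by blast
qed

lemma final: assumes mg: "median_graph V E" and V: "x \<in> V" "c \<in> V" "oo \<in> V" "w \<in> V"
  and h1: "w \<in> interval V E x c" and h2: "w \<in> interval V E c oo"
  shows "median V E x c oo \<in> interval V E x w"
proof -
  obtain t where t: "t \<in> interval V E w x \<inter> interval V E w oo \<inter> interval V E x oo"
    using med_ex[OF mg V(4) V(1) V(3)] by blast
  have tV: "t \<in> V" using t unfolding interval_def by blast
  note s = gdist_sym[OF mg_sym[OF mg]]
  have e1: "gdist E x c = gdist E x w + gdist E w c" using h1 unfolding interval_def by simp
  have e2: "gdist E c oo = gdist E c w + gdist E w oo" using h2 unfolding interval_def by simp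
  have e3: "gdist E w t + gdist E t x = gdist E w x" using t unfolding interval_def by blast
  have e4: "gdist E w t + gdist E t oo = gdist E w oo" using t unfolding interval_def by blast
  have t1: "gdist E t c \<le> gdist E t w + gdist E w c" using tri[OF mg tV V(4) V(2)] .
  have t2: "gdist E x c \<le> gdist E x t + gdist E t c" using tri[OF mg V(1) tV V(2)] .
  have t3: "gdist E c t \<le> gdist E c w + gdist E w t" using tri[OF mg V(2) V(4) tV] .
  have t4: "gdist E c oo \<le> gdist E c t + gdist E t oo" using tri[OF mg V(2) tV V(3)] .
  have "t \<in> interval V E x c"
  proof -
    have "gdist E x t + gdist E t c = gdist E x c"
      using e1 e3 t1 t2 s[of x t] s[of x w] s[of t w] by linarith
    then show ?thesis unfolding interval_def using tV by simp
  qed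
  moreover have "t \<in> interval V E c oo"
  proof -
    have "gdist E c t + gdist E t oo = gdist E c oo"
      using e2 e4 t3 t4 s[of w t] s[of c w] s[of w c] s[of c t] by linarith
    then show ?thesis unfolding interval_def using tV by simp
  qed
  ultimately have "median V E x c oo = t" using med_uniq[OF mg V(1-3)] t by blast
  moreover have "t \<in> interval V E x w" using t interval_sym[OF mg] by blast
  ultimately show ?thesis by simp
qed

lemma Bempty: "Bset V E pl u w = {} \<Longrightarrow> u' \<noteq> u \<Longrightarrow> Pset V E pl u w \<inter> Pset V E pl u' w = {}"
  unfolding Bset_def by blast

theorem lemmaI8:
  fixes V :: "'a set" and E :: "'a \<Rightarrow> 'a \<Rightarrow> bool" and x y z :: 'a
    and w :: "nat \<Rightarrow> 'a" and p :: "nat \<Rightarrow> agent" and q :: "nat \<Rightarrow> 'a proposal"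
    and vt :: "nat \<Rightarrow> agent \<Rightarrow> bool" and n :: nat
  assumes "median_graph V E"
    and "x \<in> V" and "y \<in> V" and "z \<in> V"
    and "ending_play V E (loc x y z) w p q vt n"
  shows "median V E x y z \<in> interval V E x (w n)"
proof -
  note ep = assms(5)[unfolded ending_play_def]
  have qV: "\<forall>i\<le>n. \<forall>v. q i = Node v \<longrightarrow> v \<in> V" using ep by blast
  have wV: "\<forall>i\<le>n. w i \<in> V"
  proof (intro allI impI)
    fix i assume "i \<le> n" then show "w i \<in> V"
    proof (induction i)
      case 0 then show ?case using ep by blast
    next
      case (Suc i)
      have "i < n" using Suc.prems by simp
      then have "w (Suc i) = next_winner (w i) (q i) (vt i)" using ep by blast
      moreover have "w i \<in> V" using Suc by simp
      moreover have "\<forall>v. q i = Node v \<longrightarrow> v \<in> V" using qV \<open>i < n\<close> less_imp_le by blast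
      ultimately show ?case unfolding next_winner_def by (cases "q i") auto
    qed
  qed
  then have wn: "w n \<in> V" by simp
  have acc: "vt n AY \<or> vt n AZ" using ep unfolding accepted_def by blast
  have tv: "\<And>u. u \<noteq> AX \<Longrightarrow> vt n u = (Bset V E (loc x y z) u (w n) = {})"
  proof -
    fix u assume "u \<noteq> AX"
    then have "truthful_vote V E (loc x y z) u (w n) (q n) (vt n u)" using ep by blast
    then show "vt n u = (Bset V E (loc x y z) u (w n) = {})" using ep unfolding truthful_vote_def by simp
  qed
  show ?thesis
  proof (cases "vt n AY")
    case True
    then have B: "Bset V E (loc x y z) AY (w n) = {}" using tv by auto
    have "(interval V E y (w n) - {w n}) \<inter> (interval V E x (w n) - {w n}) = {}"
      using Bempty[OF B, of AX] unfolding Pset_def loc_def by simp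
    then have "w n \<in> interval V E y x" using noncommon[OF assms(1,3,2) wn] by simp
    then have a1: "w n \<in> interval V E x y" using interval_sym[OF assms(1)] by blast
    have "(interval V E y (w n) - {w n}) \<inter> (interval V E z (w n) - {w n}) = {}"
      using Bempty[OF B, of AZ] unfolding Pset_def loc_def by simp
    then have a2: "w n \<in> interval V E y z" using noncommon[OF assms(1,3,4) wn] by simp
    show ?thesis using final[OF assms(1,2,3,4) wn a1 a2] .
  next
    case False
    then have "vt n AZ" using acc by simp
    then have B: "Bset V E (loc x y z) AZ (w n) = {}" using tv by auto
    have "(interval V E z (w n) - {w n}) \<inter> (interval V E x (w n) - {w n}) = {}"
      using Bempty[OF B, of AX] unfolding Pset_def loc_def by simp
    then have "w n \<in> interval V E z x" using noncommon[OF assms(1,4,2) wn] by simp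
    then have a1: "w n \<in> interval V E x z" using interval_sym[OF assms(1)] by blast
    have "(interval V E z (w n) - {w n}) \<inter> (interval V E y (w n) - {w n}) = {}"
      using Bempty[OF B, of AY] unfolding Pset_def loc_def by simp
    then have a2: "w n \<in> interval V E z y" using noncommon[OF assms(1,4,3) wn] by simp
    show ?thesis using final[OF assms(1,2,4,3) wn a1 a2] med_perm[OF assms(1-4)] by simp
  qed
qed

end
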